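(* Let $A$ be a commutative ring and $\sigma$ a hereditary torsion theory on $A$-modules such that $A$ is totally $\sigma$-artinian. Then every prime ideal $\mathfrak{p}\in\mathcal{K}(\sigma)$ is a minimal prime ideal of $A$. Consequently $\mathcal{K}(\sigma)=\mathcal{C}(\sigma)$.
   Context: $\mathcal{L}(\sigma)$ is the Gabriel filter of $\sigma$. $A$ is totally $\sigma$-artinian if for every descending chain of ideals $\mathfrak{a}_1\supseteq\mathfrak{a}_2\supseteq\cdots$ there exist $m$ and $\mathfrak{h}\in\mathcal{L}(\sigma)$ with $\mathfrak{a}_m\mathfrak{h}\subseteq\mathfrak{a}_s$ for all $s\ge m$. $\mathcal{K}(\sigma)$ is the set of prime ideals $\mathfrak{p}$ of $A$ with $\mathfrak{p}\notin\mathcal{L}(\sigma)$ (equivalently $A/\mathfrak{p}$ is $\sigma$-torsionfree), and $\mathcal{C}(\sigma)$ is the set of maximal elements of $\mathcal{K}(\sigma)$ under inclusion. *)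

theory Defs
  imports "HOL-Algebra.Ideal_Product"
begin

definition colon_ideal :: "('a, 'b) ring_scheme \<Rightarrow> 'a set \<Rightarrow> 'a \<Rightarrow> 'a set" where
  "colon_ideal R I r = {x \<in> carrier R. x \<otimes>\<^bsub>R\<^esub> r \<in> I}"

text \<open>Gabriel filter (Gabriel topology) of ideals of R; hereditary torsion theories
  on R-modules correspond bijectively to these, via sigma \<mapsto> L(sigma).\<close>
definition gabriel_filter :: "('a, 'b) ring_scheme \<Rightarrow> 'a set set \<Rightarrow> bool" where
  "gabriel_filter R L \<longleftrightarrow>
     (\<forall>I\<in>L. ideal I R) \<and>
     carrier R \<in> L \<and>
     (\<forall>I J. I \<in> L \<and> ideal J R \<and> I \<subseteq> J \<longrightarrow> J \<in> L) \<and>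
     (\<forall>I\<in>L. \<forall>r\<in>carrier R. colon_ideal R I r \<in> L) \<and>
     (\<forall>I J. ideal J R \<and> I \<in> L \<and> (\<forall>r\<in>I. colon_ideal R J r \<in> L) \<longrightarrow> J \<in> L)"

definition totally_artinian :: "('a, 'b) ring_scheme \<Rightarrow> 'a set set \<Rightarrow> bool" where
  "totally_artinian R L \<longleftrightarrow>
     (\<forall>a :: nat \<Rightarrow> 'a set. (\<forall>n. ideal (a n) R) \<and> (\<forall>n. a (Suc n) \<subseteq> a n) \<longrightarrow>
        (\<exists>m. \<exists>h\<in>L. \<forall>s\<ge>m. a m \<cdot>\<^bsub>R\<^esub> h \<subseteq> a s))"

definition Kset :: "('a, 'b) ring_scheme \<Rightarrow> 'a set set \<Rightarrow> 'a set set" where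
  "Kset R L = {p. primeideal p R \<and> p \<notin> L}"

definition Cset :: "('a, 'b) ring_scheme \<Rightarrow> 'a set set \<Rightarrow> 'a set set" where
  "Cset R L = {p \<in> Kset R L. \<forall>q \<in> Kset R L. p \<subseteq> q \<longrightarrow> q = p}"

definition minimal_prime :: "('a, 'b) ring_scheme \<Rightarrow> 'a set \<Rightarrow> bool" where
  "minimal_prime R p \<longleftrightarrow> primeideal p R \<and> (\<forall>q. primeideal q R \<and> q \<subseteq> p \<longrightarrow> q = p)"

end

theory Submission
  imports Defs
begin

lemma key_lemma:
  fixes R (structure) and L :: "'a set set"
  assumes cr: "cring R"
    and gf: "gabriel_filter R L"
    and ta: "totally_artinian R L"
    and pp: "primeideal p R" and pL: "p \<notin> L"
    and qp: "primeideal q R" and qsub: "q \<subseteq> p"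
  shows "q = p"
proof (rule ccontr)
  interpret cring R by (rule cr)
  interpret P: primeideal p R by (rule pp)
  interpret Q: primeideal q R by (rule qp)
  assume "q \<noteq> p"
  then obtain x where xp: "x \<in> p" and xq: "x \<notin> q" using qsub by blast
  have xc: "x \<in> carrier R" using xp P.Icarr by blast
  have powq: "x [^] (n::nat) \<notin> q" for n
  proof (induction n)
    case 0
    then show ?case using Q.one_imp_carrier Q.I_notcarr by auto
  next
    case (Suc n)
    then show ?case using Q.I_prime[of "x [^] n" x] xc xq by auto
  qed
  define a where "a n = PIdl (x [^] (n::nat)) <+>\<^bsub>R\<^esub> q" for n
  have aid: "ideal (a n) R" for n
    unfolding a_def by (rule add_ideals[OF cgenideal_ideal Q.is_ideal]) (use xc in simp)
  have adec: "a (Suc n) \<subseteq> a n" for n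
  proof
    fix y assume "y \<in> a (Suc n)"
    then obtain z w where z: "z \<in> carrier R" and w: "w \<in> q" and y: "y = z \<otimes> x [^] Suc n \<oplus> w"
      unfolding a_def set_add_def' cgenideal_def by blast
    have "z \<otimes> x [^] Suc n = (z \<otimes> x) \<otimes> x [^] n"
      using z xc by (metis m_assoc m_comm nat_pow_Suc nat_pow_closed)
    then have y': "y = (z \<otimes> x) \<otimes> x [^] n \<oplus> w" using y by simp
    have mem: "(z \<otimes> x) \<otimes> x [^] n \<in> PIdl (x [^] n)" unfolding cgenideal_def using z xc by blast
    show "y \<in> a n" unfolding a_def set_add_def'
      by (rule UN_I[OF mem], rule UN_I[OF w]) (simp add: y')
  qed
  have ta': "\<forall>a :: nat \<Rightarrow> 'a set. (\<forall>n. ideal (a n) R) \<and> (\<forall>n. a (Suc n) \<subseteq> a n) \<longrightarrow>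
        (\<exists>m. \<exists>h\<in>L. \<forall>s\<ge>m. a m \<cdot>\<^bsub>R\<^esub> h \<subseteq> a s)"
    using ta by (simp only: totally_artinian_def)
  have "(\<forall>n. ideal (a n) R) \<and> (\<forall>n. a (Suc n) \<subseteq> a n) \<longrightarrow>
        (\<exists>m. \<exists>h\<in>L. \<forall>s\<ge>m. a m \<cdot>\<^bsub>R\<^esub> h \<subseteq> a s)"
    by (rule spec[OF ta'])
  moreover have "(\<forall>n. ideal (a n) R) \<and> (\<forall>n. a (Suc n) \<subseteq> a n)" using aid adec by blast
  ultimately have "\<exists>m. \<exists>h\<in>L. \<forall>s\<ge>m. a m \<cdot>\<^bsub>R\<^esub> h \<subseteq> a s" by (rule mp)
  then obtain m h where hL: "h \<in> L" and hm: "\<forall>s\<ge>m. a m \<cdot>\<^bsub>R\<^esub> h \<subseteq> a s"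
    by blast
  have gf1: "\<forall>I\<in>L. ideal I R" and gf3: "\<forall>I J. I \<in> L \<and> ideal J R \<and> I \<subseteq> J \<longrightarrow> J \<in> L"
    using gf unfolding gabriel_filter_def by (meson conjunct1 conjunct2)+
  have hid: "ideal h R" using gf1 hL by blast
  have "h \<subseteq> p"
  proof
    fix y assume yh: "y \<in> h"
    have yc: "y \<in> carrier R" by (rule ideal.Icarr[OF hid yh])
    have mem1: "\<one> \<otimes> x [^] m \<in> PIdl (x [^] m)" unfolding cgenideal_def using one_closed by blast
    have "x [^] m \<in> a m" unfolding a_def set_add_def'
      by (rule UN_I[OF mem1], rule UN_I[OF additive_subgroup.zero_closed[OF ideal.axioms(1)[OF Q.is_ideal]]]) (simp add: xc)
    then have "x [^] m \<otimes> y \<in> a m \<cdot>\<^bsub>R\<^esub> h" using yh by (rule ideal_prod.prod)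
    moreover have "a m \<cdot>\<^bsub>R\<^esub> h \<subseteq> a (Suc m)" using hm by simp
    ultimately have "x [^] m \<otimes> y \<in> a (Suc m)" by (rule subsetD[rotated])
    then obtain z w where z: "z \<in> carrier R" and w: "w \<in> q"
      and e: "x [^] m \<otimes> y = z \<otimes> x [^] Suc m \<oplus> w"
      unfolding a_def set_add_def' cgenideal_def by blast
    have wc: "w \<in> carrier R" using w Q.Icarr by blast
    define X where "X = x [^] m"
    have Xc: "X \<in> carrier R" unfolding X_def using xc by simp
    have XS: "x [^] Suc m = X \<otimes> x" unfolding X_def by simp
    have e': "X \<otimes> y = z \<otimes> (X \<otimes> x) \<oplus> w" using e XS X_def by simp
    have "x [^] m \<otimes> (y \<ominus> z \<otimes> x) = X \<otimes> y \<ominus> z \<otimes> (X \<otimes> x)"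
      unfolding X_def[symmetric] using Xc xc yc z by algebra
    also have "\<dots> = (z \<otimes> (X \<otimes> x) \<oplus> w) \<ominus> z \<otimes> (X \<otimes> x)" using e' by simp
    also have "\<dots> = w" using wc Xc xc z by algebra
    finally have "x [^] m \<otimes> (y \<ominus> z \<otimes> x) \<in> q" using w by simp
    then have "y \<ominus> z \<otimes> x \<in> q" using Q.I_prime powq xc yc z by blast
    then have d: "y \<ominus> z \<otimes> x \<in> p" using qsub by blast
    have "z \<otimes> x \<in> p" using P.I_l_closed z xp by blast
    then have "(y \<ominus> z \<otimes> x) \<oplus> z \<otimes> x \<in> p" using d P.a_closed by blast
    moreover have "(y \<ominus> z \<otimes> x) \<oplus> z \<otimes> x = y" using yc z xc
      by algebra
    ultimately show "y \<in> p" by simp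
  qed
  then have "p \<in> L" by (rule gf3[rule_format, OF conjI[OF hL conjI[OF P.is_ideal]]])
  with pL show False by (rule notE)
qed

theorem mainTheorem15:
  fixes R :: "('a, 'b) ring_scheme" and L :: "'a set set"
  assumes "cring R"
    and "gabriel_filter R L"
    and "totally_artinian R L"
  shows "(\<forall>p \<in> Kset R L. minimal_prime R p) \<and> Kset R L = Cset R L"
proof -
  have mp: "minimal_prime R p" if "p \<in> Kset R L" for p
    using that key_lemma[OF assms] unfolding Kset_def minimal_prime_def by blast
  have "Kset R L = Cset R L"
  proof
    show "Kset R L \<subseteq> Cset R L" unfolding Cset_def
      using mp unfolding minimal_prime_def Kset_def by blast
  next
    show "Cset R L \<subseteq> Kset R L" unfolding Cset_def by blast
  qed
  then show ?thesis using mp by blast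
qed

end
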